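(* In the category $P_2$, let $f:A\to X$ and $g:B\to X$ be arrows. Let $Y=\{(a,b)\in A\times B : f(a)=g(b)\}$, with the structure inherited from the product geometry $A\times B$ (identity $(e_A,e_B)$ and triple set $\Delta_{A\times B}\cap(Y\times Y\times Y)$), and let $\alpha:Y\to A$, $\alpha(a,b)=a$, and $\beta:Y\to B$, $\beta(a,b)=b$. Then $Y$ is an object of $P_2$, $\alpha,\beta$ are arrows of $P_2$ with $f\circ\alpha=g\circ\beta$, and this square is a pullback in $P_2$: for every object $Z$ and arrows $f':Z\to A$, $g':Z\to B$ of $P_2$ with $f\circ f'=g\circ g'$, there is a unique arrow $\varepsilon:Z\to Y$ of $P_2$ with $\alpha\circ\varepsilon=f'$ and $\beta\circ\varepsilon=g'$, namely $\varepsilon(x)=(f'(x),g'(x))$.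
   Context: A Pasch geometry is a triple $(A,e,\Delta_A)$ with $A$ a set, $e\in A$, $\Delta_A\subseteq A\times A\times A$, such that: (1) for each $a\in A$ there is a unique $b\in A$ with $(a,b,e)\in\Delta_A$, denoted $a^\#$; (2) $e^\#=e$ and $(a^\#)^\#=a$ for all $a$; (3) $(a,b,c)\in\Delta_A$ implies $(b,c,a)\in\Delta_A$; (4) if $(a_1,a_2,a_3),(a_1,a_4,a_5)\in\Delta_A$ then there is $a_6\in A$ with $(a_6,a_4^\#,a_2)\in\Delta_A$ and $(a_6,a_5,a_3^\#)\in\Delta_A$. A geometry is sharp if for all $a,b\in A$ there is at most one $c\in A$ with $(a,b,c)\in\Delta_A$. The product geometry $A\times B$ has identity $(e_A,e_B)$ and $\Delta_{A\times B}=\{((a_1,b_1),(a_2,b_2),(a_3,b_3)) : (a_1,a_2,a_3)\in\Delta_A,(b_1,b_2,b_3)\in\Delta_B\}$. A geometry morphism $f:A\to B$ is a map with $f(e_A)=e_B$ and $(x,y,z)\in\Delta_A\Rightarrow(f(x),f(y),f(z))\in\Delta_B$. A geometry homomorphism is a morphism $f$ such that whenever $(f(x),f(y),b)\in\Delta_B$ there exists $z\in A$ with $b=f(z)$ and $(x,y,z)\in\Delta_A$. $P_2$ is the category whose objects are sharp Pasch geometries and whose arrows are geometry homomorphisms, with composition of maps. *)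

theory Defs
  imports Main
begin

text \<open>A geometry is a triple (carrier, identity, triple set).  Maps between geometries
are HOL functions considered only on the carrier.\<close>

type_synonym 'a geom = "'a set \<times> 'a \<times> ('a \<times> 'a \<times> 'a) set"

definition carr :: "'a geom \<Rightarrow> 'a set" where "carr G = fst G"
definition ident :: "'a geom \<Rightarrow> 'a" where "ident G = fst (snd G)"
definition tri :: "'a geom \<Rightarrow> ('a \<times> 'a \<times> 'a) set" where "tri G = snd (snd G)"

definition sharp_op :: "'a geom \<Rightarrow> 'a \<Rightarrow> 'a" where
  "sharp_op G a = (THE b. b \<in> carr G \<and> (a, b, ident G) \<in> tri G)"

definition pasch_geometry :: "'a geom \<Rightarrow> bool" where
  "pasch_geometry G \<longleftrightarrow>
     ident G \<in> carr G \<and> tri G \<subseteq> carr G \<times> carr G \<times> carr G \<and>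
     (\<forall>a\<in>carr G. \<exists>!b. b \<in> carr G \<and> (a, b, ident G) \<in> tri G) \<and>
     sharp_op G (ident G) = ident G \<and>
     (\<forall>a\<in>carr G. sharp_op G (sharp_op G a) = a) \<and>
     (\<forall>a b c. (a, b, c) \<in> tri G \<longrightarrow> (b, c, a) \<in> tri G) \<and>
     (\<forall>a1 a2 a3 a4 a5. (a1, a2, a3) \<in> tri G \<and> (a1, a4, a5) \<in> tri G \<longrightarrow>
        (\<exists>a6\<in>carr G. (a6, sharp_op G a4, a2) \<in> tri G \<and> (a6, a5, sharp_op G a3) \<in> tri G))"

definition sharp_geometry :: "'a geom \<Rightarrow> bool" where
  "sharp_geometry G \<longleftrightarrow> (\<forall>a\<in>carr G. \<forall>b\<in>carr G. \<forall>c c'.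
      (a, b, c) \<in> tri G \<and> (a, b, c') \<in> tri G \<longrightarrow> c = c')"

definition P2_obj :: "'a geom \<Rightarrow> bool" where
  "P2_obj G \<longleftrightarrow> pasch_geometry G \<and> sharp_geometry G"

definition geom_morphism :: "'a geom \<Rightarrow> 'b geom \<Rightarrow> ('a \<Rightarrow> 'b) \<Rightarrow> bool" where
  "geom_morphism G H f \<longleftrightarrow> (\<forall>x\<in>carr G. f x \<in> carr H) \<and> f (ident G) = ident H \<and>
     (\<forall>x y z. (x, y, z) \<in> tri G \<longrightarrow> (f x, f y, f z) \<in> tri H)"

definition geom_hom :: "'a geom \<Rightarrow> 'b geom \<Rightarrow> ('a \<Rightarrow> 'b) \<Rightarrow> bool" where
  "geom_hom G H f \<longleftrightarrow> geom_morphism G H f \<and>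
     (\<forall>x\<in>carr G. \<forall>y\<in>carr G. \<forall>b. (f x, f y, b) \<in> tri H \<longrightarrow>
        (\<exists>z\<in>carr G. b = f z \<and> (x, y, z) \<in> tri G))"

definition P2_arrow :: "'a geom \<Rightarrow> 'b geom \<Rightarrow> ('a \<Rightarrow> 'b) \<Rightarrow> bool" where
  "P2_arrow G H f \<longleftrightarrow> P2_obj G \<and> P2_obj H \<and> geom_hom G H f"

definition pullback_geom ::
  "'a geom \<Rightarrow> 'b geom \<Rightarrow> ('a \<Rightarrow> 'x) \<Rightarrow> ('b \<Rightarrow> 'x) \<Rightarrow> ('a \<times> 'b) geom" where
  "pullback_geom A B f g =
     (let Y = {(a, b). a \<in> carr A \<and> b \<in> carr B \<and> f a = g b} in
      (Y, (ident A, ident B),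
       {((a1, b1), (a2, b2), (a3, b3)). (a1, a2, a3) \<in> tri A \<and> (b1, b2, b3) \<in> tri B}
         \<inter> (Y \<times> Y \<times> Y)))"

end

theory Submission
  imports Defs
begin

lemma pb_simps:
  "carr (pullback_geom A B f g) = {(a, b). a \<in> carr A \<and> b \<in> carr B \<and> f a = g b}"
  "ident (pullback_geom A B f g) = (ident A, ident B)"
  "((a1,b1),(a2,b2),(a3,b3)) \<in> tri (pullback_geom A B f g) \<longleftrightarrow>
     (a1, a2, a3) \<in> tri A \<and> (b1, b2, b3) \<in> tri B \<and>
     a1 \<in> carr A \<and> b1 \<in> carr B \<and> f a1 = g b1 \<and>
     a2 \<in> carr A \<and> b2 \<in> carr B \<and> f a2 = g b2 \<and>
     a3 \<in> carr A \<and> b3 \<in> carr B \<and> f a3 = g b3"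
  by (auto simp: pullback_geom_def carr_def ident_def tri_def Let_def)

lemma pg_tri_carr: "pasch_geometry G \<Longrightarrow> (a,b,c) \<in> tri G \<Longrightarrow> a \<in> carr G \<and> b \<in> carr G \<and> c \<in> carr G"
  unfolding pasch_geometry_def by blast

lemma pg_rot: "pasch_geometry G \<Longrightarrow> (a,b,c) \<in> tri G \<Longrightarrow> (b,c,a) \<in> tri G"
  unfolding pasch_geometry_def by blast

lemma pg_sharp: "pasch_geometry G \<Longrightarrow> a \<in> carr G \<Longrightarrow>
   sharp_op G a \<in> carr G \<and> (a, sharp_op G a, ident G) \<in> tri G"
  unfolding pasch_geometry_def sharp_op_def
  by (metis (no_types, lifting) theI')

lemma pg_sharp_uniq: "pasch_geometry G \<Longrightarrow> (a, b, ident G) \<in> tri G \<Longrightarrow> b = sharp_op G a"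
proof -
  assume p: "pasch_geometry G" and t: "(a, b, ident G) \<in> tri G"
  then have c: "a \<in> carr G" "b \<in> carr G" using pg_tri_carr by metis+
  with p have u: "\<exists>!b. b \<in> carr G \<and> (a, b, ident G) \<in> tri G" unfolding pasch_geometry_def by blast
  show ?thesis using pg_sharp[OF p c(1)] u c t by blast
qed

lemma pg_pasch: "pasch_geometry G \<Longrightarrow> (a1, a2, a3) \<in> tri G \<Longrightarrow> (a1, a4, a5) \<in> tri G \<Longrightarrow>
   \<exists>a6\<in>carr G. (a6, sharp_op G a4, a2) \<in> tri G \<and> (a6, a5, sharp_op G a3) \<in> tri G"
  unfolding pasch_geometry_def by blast

lemma pg_sharp_ident: "pasch_geometry G \<Longrightarrow> sharp_op G (ident G) = ident G"
  unfolding pasch_geometry_def by blast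

lemma pg_sharp_inv: "pasch_geometry G \<Longrightarrow> a \<in> carr G \<Longrightarrow> sharp_op G (sharp_op G a) = a"
  unfolding pasch_geometry_def by blast

lemma pg_ident: "pasch_geometry G \<Longrightarrow> ident G \<in> carr G"
  unfolding pasch_geometry_def by blast

lemma sg_uniq: "sharp_geometry G \<Longrightarrow> a \<in> carr G \<Longrightarrow> b \<in> carr G \<Longrightarrow> (a,b,c) \<in> tri G \<Longrightarrow> (a,b,c') \<in> tri G \<Longrightarrow> c = c'"
  unfolding sharp_geometry_def by blast

lemma hom_sharp: "pasch_geometry G \<Longrightarrow> pasch_geometry H \<Longrightarrow> geom_morphism G H f \<Longrightarrow> a \<in> carr G \<Longrightarrow>
   f (sharp_op G a) = sharp_op H (f a)"
proof -
  assume pG: "pasch_geometry G" and pH: "pasch_geometry H" and m: "geom_morphism G H f" and a: "a \<in> carr G"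
  have "(f a, f (sharp_op G a), f (ident G)) \<in> tri H"
    using pg_sharp[OF pG a] m unfolding geom_morphism_def by blast
  then show ?thesis using m pg_sharp_uniq[OF pH] unfolding geom_morphism_def by metis
qed

lemma hom_lift: "geom_hom G H f \<Longrightarrow> x \<in> carr G \<Longrightarrow> y \<in> carr G \<Longrightarrow> (f x, f y, b) \<in> tri H \<Longrightarrow>
   \<exists>z\<in>carr G. b = f z \<and> (x, y, z) \<in> tri G"
  unfolding geom_hom_def by blast

lemma morph: "geom_hom G H f \<Longrightarrow> geom_morphism G H f"
  unfolding geom_hom_def by blast

lemma morph_carr: "geom_morphism G H f \<Longrightarrow> x \<in> carr G \<Longrightarrow> f x \<in> carr H"
  unfolding geom_morphism_def by blast
lemma morph_id: "geom_morphism G H f \<Longrightarrow> f (ident G) = ident H"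
  unfolding geom_morphism_def by blast
lemma morph_tri: "geom_morphism G H f \<Longrightarrow> (x,y,z) \<in> tri G \<Longrightarrow> (f x, f y, f z) \<in> tri H"
  unfolding geom_morphism_def by blast

lemma pb_main_obj:
  assumes f: "P2_arrow A X f" and g: "P2_arrow B X g"
  defines "Y \<equiv> pullback_geom A B f g"
  shows "P2_obj Y"
proof -
  have pA: "pasch_geometry A" and sA: "sharp_geometry A" and pX: "pasch_geometry X"
    and hf: "geom_hom A X f" using f unfolding P2_arrow_def P2_obj_def by auto
  have pB: "pasch_geometry B" and sB: "sharp_geometry B"
    and hg: "geom_hom B X g" using g unfolding P2_arrow_def P2_obj_def by auto
  have mf: "geom_morphism A X f" and mg: "geom_morphism B X g" using hf hg morph by blast+
  have cY: "\<And>a b. (a,b) \<in> carr Y \<longleftrightarrow> a \<in> carr A \<and> b \<in> carr B \<and> f a = g b"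
    unfolding Y_def pb_simps by simp
  have iY: "ident Y = (ident A, ident B)" unfolding Y_def pb_simps by simp
  have tY: "\<And>a1 b1 a2 b2 a3 b3. ((a1,b1),(a2,b2),(a3,b3)) \<in> tri Y \<longleftrightarrow>
     (a1, a2, a3) \<in> tri A \<and> (b1, b2, b3) \<in> tri B \<and>
     f a1 = g b1 \<and> f a2 = g b2 \<and> f a3 = g b3"
    unfolding Y_def pb_simps using pg_tri_carr[OF pA] pg_tri_carr[OF pB] by blast
  have sharpcomp: "\<And>a b. (a,b) \<in> carr Y \<Longrightarrow> f (sharp_op A a) = g (sharp_op B b)"
    using cY hom_sharp[OF pA pX mf] hom_sharp[OF pB pX mg] by metis
  have eu: "\<And>a b. (a,b) \<in> carr Y \<Longrightarrow> (\<exists>!c. c \<in> carr Y \<and> ((a,b), c, ident Y) \<in> tri Y) \<and>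
        ((a,b), (sharp_op A a, sharp_op B b), ident Y) \<in> tri Y \<and> (sharp_op A a, sharp_op B b) \<in> carr Y"
  proof -
    fix a b assume ab: "(a,b) \<in> carr Y"
    have e: "((a,b), (sharp_op A a, sharp_op B b), ident Y) \<in> tri Y"
      using ab cY iY tY pg_sharp[OF pA] pg_sharp[OF pB] sharpcomp morph_id[OF mf] morph_id[OF mg]
      by auto
    have c: "(sharp_op A a, sharp_op B b) \<in> carr Y"
      using ab cY pg_sharp[OF pA] pg_sharp[OF pB] sharpcomp by auto
    have "\<And>c. ((a,b), c, ident Y) \<in> tri Y \<Longrightarrow> c = (sharp_op A a, sharp_op B b)"
    proof -
      fix c assume "((a,b), c, ident Y) \<in> tri Y"
      then show "c = (sharp_op A a, sharp_op B b)"
        using iY tY pg_sharp_uniq[OF pA] pg_sharp_uniq[OF pB] by (cases c) auto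
    qed
    then show "?thesis a b" using e c by blast
  qed
  have shY: "\<And>a b. (a,b) \<in> carr Y \<Longrightarrow> sharp_op Y (a,b) = (sharp_op A a, sharp_op B b)"
  proof -
    fix a b assume ab: "(a,b) \<in> carr Y"
    show "?thesis a b" unfolding sharp_op_def[of Y]
      using the1_equality[OF conjunct1[OF eu[OF ab]] conjI[OF conjunct2[OF conjunct2[OF eu[OF ab]]] conjunct1[OF conjunct2[OF eu[OF ab]]]]] .
  qed
  have triC: "tri Y \<subseteq> carr Y \<times> carr Y \<times> carr Y"
    unfolding Y_def by (auto simp: pullback_geom_def carr_def tri_def Let_def)
  have idC: "ident Y \<in> carr Y"
    using iY cY pg_ident[OF pA] pg_ident[OF pB] morph_id[OF mf] morph_id[OF mg] by auto
  have pasch: "pasch_geometry Y"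
    unfolding pasch_geometry_def
  proof (intro conjI)
    show "ident Y \<in> carr Y" by fact
    show "tri Y \<subseteq> carr Y \<times> carr Y \<times> carr Y" by fact
    show "\<forall>a\<in>carr Y. \<exists>!b. b \<in> carr Y \<and> (a, b, ident Y) \<in> tri Y" using eu by auto
    show "sharp_op Y (ident Y) = ident Y"
      using shY[of "ident A" "ident B"] idC iY pg_sharp_ident[OF pA] pg_sharp_ident[OF pB] by simp
    show "\<forall>a\<in>carr Y. sharp_op Y (sharp_op Y a) = a"
    proof
      fix y assume y: "y \<in> carr Y"
      obtain a b where [simp]: "y = (a,b)" by (cases y)
      show "sharp_op Y (sharp_op Y y) = y"
        using y shY eu pg_sharp_inv[OF pA] pg_sharp_inv[OF pB] cY by auto
    qed
    show "\<forall>a b c. (a, b, c) \<in> tri Y \<longrightarrow> (b, c, a) \<in> tri Y"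
    proof (intro allI impI)
      fix x y z assume "(x,y,z) \<in> tri Y"
      then show "(y,z,x) \<in> tri Y"
        using tY pg_rot[OF pA] pg_rot[OF pB]
        by (cases x; cases y; cases z) auto
    qed
    show "\<forall>a1 a2 a3 a4 a5. (a1, a2, a3) \<in> tri Y \<and> (a1, a4, a5) \<in> tri Y \<longrightarrow>
        (\<exists>a6\<in>carr Y. (a6, sharp_op Y a4, a2) \<in> tri Y \<and> (a6, a5, sharp_op Y a3) \<in> tri Y)"
    proof (intro allI impI)
      fix y1 y2 y3 y4 y5
      assume h: "(y1, y2, y3) \<in> tri Y \<and> (y1, y4, y5) \<in> tri Y"
      obtain a1 b1 where [simp]: "y1 = (a1,b1)" by (cases y1)
      obtain a2 b2 where [simp]: "y2 = (a2,b2)" by (cases y2)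
      obtain a3 b3 where [simp]: "y3 = (a3,b3)" by (cases y3)
      obtain a4 b4 where [simp]: "y4 = (a4,b4)" by (cases y4)
      obtain a5 b5 where [simp]: "y5 = (a5,b5)" by (cases y5)
      have h1: "(a1,a2,a3) \<in> tri A" "(b1,b2,b3) \<in> tri B" "(a1,a4,a5) \<in> tri A" "(b1,b4,b5) \<in> tri B"
        and e: "f a2 = g b2" "f a3 = g b3" "f a4 = g b4" "f a5 = g b5"
        using h tY by auto
      have c3: "(a3,b3) \<in> carr Y" "(a4,b4) \<in> carr Y"
        using h triC by auto
      obtain a6 where a6: "a6 \<in> carr A" "(a6, sharp_op A a4, a2) \<in> tri A" "(a6, a5, sharp_op A a3) \<in> tri A"
        using pg_pasch[OF pA h1(1) h1(3)] by blast
      obtain b6 where b6: "b6 \<in> carr B" "(b6, sharp_op B b4, b2) \<in> tri B" "(b6, b5, sharp_op B b3) \<in> tri B"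
        using pg_pasch[OF pB h1(2) h1(4)] by blast
      have "(f (sharp_op A a4), f a2, f a6) \<in> tri X"
        using morph_tri[OF mf pg_rot[OF pA a6(2)]] .
      then have "(g (sharp_op B b4), g b2, f a6) \<in> tri X"
        using sharpcomp[OF c3(2)] e by simp
      moreover have cb: "sharp_op B b4 \<in> carr B" "b2 \<in> carr B"
        using pg_tri_carr[OF pB b6(2)] by auto
      ultimately obtain z where z: "z \<in> carr B" "f a6 = g z" "(sharp_op B b4, b2, z) \<in> tri B"
        using hom_lift[OF hg] by metis
      have "z = b6" using sg_uniq[OF sB cb z(3) pg_rot[OF pB b6(2)]] .
      then have e6: "f a6 = g b6" using z by simp
      have c6: "(a6,b6) \<in> carr Y" using cY a6 b6 e6 by auto
      show "\<exists>a6\<in>carr Y. (a6, sharp_op Y y4, y2) \<in> tri Y \<and> (a6, y5, sharp_op Y y3) \<in> tri Y"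
      proof (intro bexI[of _ "(a6,b6)"] conjI)
        show "(a6,b6) \<in> carr Y" by fact
        show "((a6, b6), sharp_op Y y4, y2) \<in> tri Y"
          using shY[OF c3(2)] tY a6 b6 e6 e sharpcomp[OF c3(2)] by simp
        show "((a6, b6), y5, sharp_op Y y3) \<in> tri Y"
          using shY[OF c3(1)] tY a6 b6 e6 e sharpcomp[OF c3(1)] by simp
      qed
    qed
  qed
  have sharp: "sharp_geometry Y"
    unfolding sharp_geometry_def
  proof (intro ballI allI impI)
    fix x y c c' assume h: "x \<in> carr Y" "y \<in> carr Y" "(x, y, c) \<in> tri Y \<and> (x, y, c') \<in> tri Y"
    obtain a1 b1 where [simp]: "x = (a1,b1)" by (cases x)
    obtain a2 b2 where [simp]: "y = (a2,b2)" by (cases y)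
    obtain a3 b3 where [simp]: "c = (a3,b3)" by (cases c)
    obtain a4 b4 where [simp]: "c' = (a4,b4)" by (cases c')
    have "a3 = a4" using h tY cY sg_uniq[OF sA, of a1 a2 a3 a4] by simp
    moreover have "b3 = b4" using h tY cY sg_uniq[OF sB, of b1 b2 b3 b4] by simp
    ultimately show "c = c'" by simp
  qed
  show ?thesis using pasch sharp unfolding P2_obj_def by simp
qed


theorem theorem3p8:
  fixes A :: "'a geom" and B :: "'b geom" and X :: "'x geom"
    and f :: "'a \<Rightarrow> 'x" and g :: "'b \<Rightarrow> 'x"
  assumes f: "P2_arrow A X f" and g: "P2_arrow B X g"
  defines "Y \<equiv> pullback_geom A B f g"
  shows "P2_obj Y \<and> P2_arrow Y A fst \<and> P2_arrow Y B snd \<and>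
         (\<forall>y\<in>carr Y. f (fst y) = g (snd y)) \<and>
         (\<forall>(Z :: 'z geom) f' g'.
            P2_arrow Z A f' \<and> P2_arrow Z B g' \<and> (\<forall>x\<in>carr Z. f (f' x) = g (g' x)) \<longrightarrow>
              P2_arrow Z Y (\<lambda>x. (f' x, g' x)) \<and>
              (\<forall>x\<in>carr Z. fst (f' x, g' x) = f' x \<and> snd (f' x, g' x) = g' x) \<and>
              (\<forall>\<epsilon>. P2_arrow Z Y \<epsilon> \<and> (\<forall>x\<in>carr Z. fst (\<epsilon> x) = f' x \<and> snd (\<epsilon> x) = g' x)
                   \<longrightarrow> (\<forall>x\<in>carr Z. \<epsilon> x = (f' x, g' x))))"
proof -
  have oY: "P2_obj Y" using pb_main_obj[OF f g] unfolding Y_def .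
  have oA: "P2_obj A" and pA: "pasch_geometry A" and sA: "sharp_geometry A" and pX: "pasch_geometry X"
    and hf: "geom_hom A X f" using f unfolding P2_arrow_def P2_obj_def by auto
  have oB: "P2_obj B" and pB: "pasch_geometry B" and sB: "sharp_geometry B"
    and hg: "geom_hom B X g" using g unfolding P2_arrow_def P2_obj_def by auto
  have mf: "geom_morphism A X f" using hf by (rule morph)
  have mg: "geom_morphism B X g" using hg by (rule morph)
  have cY: "\<And>a b. (a,b) \<in> carr Y \<longleftrightarrow> a \<in> carr A \<and> b \<in> carr B \<and> f a = g b"
    unfolding Y_def pb_simps by simp
  have iY: "ident Y = (ident A, ident B)" unfolding Y_def pb_simps by simp
  have tY: "\<And>a1 b1 a2 b2 a3 b3. ((a1,b1),(a2,b2),(a3,b3)) \<in> tri Y \<longleftrightarrow>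
     (a1, a2, a3) \<in> tri A \<and> (b1, b2, b3) \<in> tri B \<and>
     f a1 = g b1 \<and> f a2 = g b2 \<and> f a3 = g b3"
    unfolding Y_def pb_simps using pg_tri_carr[OF pA] pg_tri_carr[OF pB] by blast
  have aA: "P2_arrow Y A fst"
    unfolding P2_arrow_def geom_hom_def geom_morphism_def
  proof (intro conjI ballI allI impI)
    show "P2_obj Y" "P2_obj A" by fact+
    show "\<And>x. x \<in> carr Y \<Longrightarrow> fst x \<in> carr A" using cY by auto
    show "fst (ident Y) = ident A" using iY by simp
    show "\<And>x y z. (x, y, z) \<in> tri Y \<Longrightarrow> (fst x, fst y, fst z) \<in> tri A"
      using tY by auto
    fix x y a assume x: "x \<in> carr Y" and y: "y \<in> carr Y" and t: "(fst x, fst y, a) \<in> tri A"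
    obtain a1 b1 where [simp]: "x = (a1,b1)" by (cases x)
    obtain a2 b2 where [simp]: "y = (a2,b2)" by (cases y)
    have "(f a1, f a2, f a) \<in> tri X" using morph_tri[OF mf t] by simp
    then have "(g b1, g b2, f a) \<in> tri X" using x y cY by simp
    then obtain b where b: "b \<in> carr B" "f a = g b" "(b1, b2, b) \<in> tri B"
      using hom_lift[OF hg] x y cY by (metis \<open>x = (a1,b1)\<close> \<open>y = (a2,b2)\<close>)
    have "a \<in> carr A" using pg_tri_carr[OF pA t] by simp
    then show "\<exists>z\<in>carr Y. a = fst z \<and> (x, y, z) \<in> tri Y"
      using b t x y cY tY by (intro bexI[of _ "(a,b)"]) auto
  qed
  have aB: "P2_arrow Y B snd"
    unfolding P2_arrow_def geom_hom_def geom_morphism_def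
  proof (intro conjI ballI allI impI)
    show "P2_obj Y" "P2_obj B" by fact+
    show "\<And>x. x \<in> carr Y \<Longrightarrow> snd x \<in> carr B" using cY by auto
    show "snd (ident Y) = ident B" using iY by simp
    show "\<And>x y z. (x, y, z) \<in> tri Y \<Longrightarrow> (snd x, snd y, snd z) \<in> tri B"
      using tY by auto
    fix x y b assume x: "x \<in> carr Y" and y: "y \<in> carr Y" and t: "(snd x, snd y, b) \<in> tri B"
    obtain a1 b1 where [simp]: "x = (a1,b1)" by (cases x)
    obtain a2 b2 where [simp]: "y = (a2,b2)" by (cases y)
    have "(g b1, g b2, g b) \<in> tri X" using morph_tri[OF mg t] by simp
    then have "(f a1, f a2, g b) \<in> tri X" using x y cY by simp
    then obtain a where a: "a \<in> carr A" "g b = f a" "(a1, a2, a) \<in> tri A"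
      using hom_lift[OF hf] x y cY by (metis \<open>x = (a1,b1)\<close> \<open>y = (a2,b2)\<close>)
    have "b \<in> carr B" using pg_tri_carr[OF pB t] by simp
    then show "\<exists>z\<in>carr Y. b = snd z \<and> (x, y, z) \<in> tri Y"
      using a t x y cY tY by (intro bexI[of _ "(a,b)"]) auto
  qed
  have comm: "\<forall>y\<in>carr Y. f (fst y) = g (snd y)" using cY by auto
  have univ: "P2_arrow Z A f' \<and> P2_arrow Z B g' \<and> (\<forall>x\<in>carr Z. f (f' x) = g (g' x)) \<Longrightarrow>
              P2_arrow Z Y (\<lambda>x. (f' x, g' x))" for Z :: "'z geom" and f' g'
  proof -
    assume h: "P2_arrow Z A f' \<and> P2_arrow Z B g' \<and> (\<forall>x\<in>carr Z. f (f' x) = g (g' x))"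
    have oZ: "P2_obj Z" and pZ: "pasch_geometry Z" and hf': "geom_hom Z A f'" and hg': "geom_hom Z B g'"
      using h unfolding P2_arrow_def P2_obj_def by auto
    have mf': "geom_morphism Z A f'" using hf' by (rule morph)
    have mg': "geom_morphism Z B g'" using hg' by (rule morph)
    have cm: "\<And>x. x \<in> carr Z \<Longrightarrow> f (f' x) = g (g' x)" using h by blast
    show ?thesis
      unfolding P2_arrow_def geom_hom_def geom_morphism_def
    proof (intro conjI ballI allI impI)
      show "P2_obj Z" "P2_obj Y" by fact+
      show "\<And>x. x \<in> carr Z \<Longrightarrow> (f' x, g' x) \<in> carr Y"
        using cY cm morph_carr[OF mf'] morph_carr[OF mg'] by auto
      show "(f' (ident Z), g' (ident Z)) = ident Y" using iY morph_id[OF mf'] morph_id[OF mg'] by simp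
      show "\<And>x y z. (x, y, z) \<in> tri Z \<Longrightarrow> ((f' x, g' x), (f' y, g' y), (f' z, g' z)) \<in> tri Y"
        using tY morph_tri[OF mf'] morph_tri[OF mg'] cm pg_tri_carr[OF pZ] by meson
      fix x y p assume x: "x \<in> carr Z" and y: "y \<in> carr Z"
        and t: "((f' x, g' x), (f' y, g' y), p) \<in> tri Y"
      obtain a b where [simp]: "p = (a,b)" by (cases p)
      have ta: "(f' x, f' y, a) \<in> tri A" and tb: "(g' x, g' y, b) \<in> tri B" using t tY by auto
      obtain z where z: "z \<in> carr Z" "a = f' z" "(x,y,z) \<in> tri Z"
        using hom_lift[OF hf' x y ta] by blast
      have "(g' x, g' y, g' z) \<in> tri B" using morph_tri[OF mg' z(3)] .
      then have "b = g' z"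
        using sg_uniq[OF sB _ _ tb] morph_carr[OF mg'] x y by blast
      then show "\<exists>z\<in>carr Z. p = (f' z, g' z) \<and> (x, y, z) \<in> tri Z" using z by auto
    qed
  qed
  show ?thesis using oY aA aB comm univ by (auto simp: prod_eq_iff)
qed

end
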